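(* Let $\boldsymbol{\phi}\in\mathcal{D}_{\boldsymbol{\phi}}(\boldsymbol{r})$. If for all $i\in\mathcal{V}$, $j\in\{0\}\cup\mathcal{V}$ and $(a,k)\in\mathcal{S}$, $$\delta_{ij}(a,k)\begin{cases}=\min_{j'\in\{0\}\cup\mathcal{V}}\delta_{ij'}(a,k), & \text{if }\phi_{ij}(a,k)>0,\\ \ge\min_{j'\in\{0\}\cup\mathcal{V}}\delta_{ij'}(a,k), & \text{if }\phi_{ij}(a,k)=0,\end{cases}$$ then $\boldsymbol{\phi}$ is a global optimal solution of $\min_{\boldsymbol{\phi}\in\mathcal{D}_{\boldsymbol{\phi}}(\boldsymbol{r})}T(\boldsymbol{\phi})$.
   Context: Service-chain computing network model. $\mathcal{G}=(\mathcal{V},\mathcal{E})$ is a directed, strongly connected graph whose links are bidirectional ($(i,j)\in\mathcal{E}\Rightarrow(j,i)\in\mathcal{E}$). $\mathcal{A}$ is a finite set of applications; application $a$ has a destination $d_a\in\mathcal{V}$ and a chain of $|\mathcal{T}_a|$ tasks performed in order. The set of stages is $\mathcal{S}=\{(a,k): a\in\mathcal{A}, k=0,1,\dots,|\mathcal{T}_a|\}$; stage $(a,k)$ denotes packets that have completed the first $k$ tasks of $a$, and has packet size $L_{(a,k)}>0$. Exogenous input rates are $r_i(a)\ge 0$ (stage $(a,0)$ packets injected at node $i$), $\boldsymbol{r}=[r_i(a)]$. The forwarding strategy $\boldsymbol{\phi}=[\phi_{ij}(a,k)]_{(a,k)\in\mathcal{S},i\in\mathcal{V},j\in\{0\}\cup\mathcal{V}}$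 has $\phi_{ij}(a,k)\in[0,1]$; for $j\in\mathcal{V}$ it is the fraction of node $i$'s stage-$(a,k)$ traffic sent to node $j$ (with $\phi_{ij}(a,k)=0$ if $(i,j)\notin\mathcal{E}$), and $\phi_{i0}(a,k)$ is the fraction sent to $i$'s local processor, which converts each stage-$(a,k)$ packet into one stage-$(a,k+1)$ packet; $\phi_{i0}(a,|\mathcal{T}_a|)=0$. Flow conservation: $\sum_{j\in\{0\}\cup\mathcal{V}}\phi_{ij}(a,k)=0$ if $k=|\mathcal{T}_a|$ and $i=d_a$, and $=1$ otherwise. Traffic $t_i(a,k)$ satisfies $t_i(a,0)=\sum_{j\in\mathcal{V}}t_j(a,0)\phi_{ji}(a,0)+r_i(a)$ and, for $k\ge1$, $t_i(a,k)=\sum_{j\in\mathcal{V}}t_j(a,k)\phi_{ji}(a,k)+t_i(a,k-1)\phi_{i0}(a,k-1)$. Link flows $f_{ij}(a,k)=t_i(a,k)\phi_{ij}(a,k)$, processor inputs $g_i(a,k)=t_i(a,k)\phi_{i0}(a,k)$, total link flow $F_{ij}=\sum_{(a,k)\in\mathcal{S}}L_{(a,k)}f_{ij}(a,k)$, computation workload $G_i=\sum_{(a,k)\in\mathcal{S}}w_i(a,k)g_i(a,k)$ with weights $w_i(a,k)>0$. Link costs $D_{ij}(\cdot)$ and computation costs $C_i(\cdot)$ are increasing, continuously differentiable, convex functions (possibly taking value $+\infty$ outside a domain). Total cost $T(\boldsymbol{\phi})=\sum_{(i,j)\in\mathcal{E}}D_{ij}(F_{ij})+\sum_{i\in\mathcal{V}}C_i(G_i)$.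 The feasible set $\mathcal{D}_{\boldsymbol{\phi}}(\boldsymbol{r})$ consists of $\boldsymbol{\phi}$ satisfying flow conservation with all $D_{ij}(F_{ij})<\infty$ and $C_i(G_i)<\infty$; $\boldsymbol{r}$ is such that this set is nonempty. Marginal quantities: $\partial T/\partial t_i(a,k)$ is the marginal total cost of an additional exogenous injection of stage-$(a,k)$ traffic at node $i$ (with $\boldsymbol{\phi}$ fixed); it satisfies $\partial T/\partial t_{d_a}(a,|\mathcal{T}_a|)=0$, for $k=|\mathcal{T}_a|$: $\frac{\partial T}{\partial t_i(a,k)}=\sum_{j\in\mathcal{V}}\phi_{ij}(a,k)\big(L_{(a,k)}D'_{ij}(F_{ij})+\frac{\partial T}{\partial t_j(a,k)}\big)$, and for $k<|\mathcal{T}_a|$: $\frac{\partial T}{\partial t_i(a,k)}=\phi_{i0}(a,k)\big(w_i(a,k)C'_i(G_i)+\frac{\partial T}{\partial t_i(a,k+1)}\big)+\sum_{j\in\mathcal{V}}\phi_{ij}(a,k)\big(L_{(a,k)}D'_{ij}(F_{ij})+\frac{\partial T}{\partial t_j(a,k)}\big)$. Modified marginals: $\delta_{ij}(a,k)=L_{(a,k)}D'_{ij}(F_{ij})+\frac{\partial T}{\partial t_j(a,k)}$ for $j\in\mathcal{V}$ with $(i,j)\in\mathcal{E}$, $\delta_{i0}(a,k)=w_i(a,k)C'_i(G_i)+\frac{\partial T}{\partial t_i(a,k+1)}$ for $k<|\mathcal{T}_a|$, and $\delta_{ij}(a,k)=\infty$ for $(i,j)\notin\mathcal{E}$ and $\delta_{i0}(a,|\mathcal{T}_a|)=\infty$.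 *)

theory Defs
  imports Complex_Main "HOL-Library.Extended_Real"
begin

text \<open>The index j in {0} \<union> V is encoded as 'v option:
  None is the local processor (index 0), Some j is neighbour node j.
  nT a = |T_a|, dest a = d_a, L a k = L_(a,k), w i a k = w_i(a,k), r i a = r_i(a).
  Cost functions D i j, C i are extended-real valued (value \<infinity> outside their domain),
  with derivatives D' i j, C' i.\<close>

definition ext_convex_nonneg :: "(real \<Rightarrow> ereal) \<Rightarrow> bool" where
  "ext_convex_nonneg h \<longleftrightarrow>
     (\<forall>x y u. 0 \<le> x \<longrightarrow> 0 \<le> y \<longrightarrow> 0 \<le> u \<longrightarrow> u \<le> 1 \<longrightarrow>
        h ((1 - u) * x + u * y) \<le> ereal (1 - u) * h x + ereal u * h y)"

definition cost_fun :: "(real \<Rightarrow> ereal) \<Rightarrow> (real \<Rightarrow> real) \<Rightarrow> bool" where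
  "cost_fun h h' \<longleftrightarrow>
     (\<forall>x\<ge>0. h x \<noteq> -\<infinity>) \<and>
     mono_on {0..} h \<and>
     ext_convex_nonneg h \<and>
     (\<forall>x. 0 \<le> x \<and> h x < \<infinity> \<longrightarrow>
        ((\<lambda>y. real_of_ereal (h y)) has_real_derivative h' x)
          (at x within {y. 0 \<le> y \<and> h y < \<infinity>})) \<and>
     continuous_on {y. 0 \<le> y \<and> h y < \<infinity>} h'"

definition network :: "'v set \<Rightarrow> ('v \<times> 'v) set \<Rightarrow> bool" where
  "network V E \<longleftrightarrow> finite V \<and> E \<subseteq> V \<times> V \<and>
     (\<forall>i j. (i, j) \<in> E \<longrightarrow> (j, i) \<in> E) \<and>
     (\<forall>i\<in>V. \<forall>j\<in>V. (i, j) \<in> E\<^sup>*)"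

definition apps_ok :: "'v set \<Rightarrow> 'a set \<Rightarrow> ('a \<Rightarrow> 'v) \<Rightarrow> ('a \<Rightarrow> nat)
    \<Rightarrow> ('a \<Rightarrow> nat \<Rightarrow> real) \<Rightarrow> ('v \<Rightarrow> 'a \<Rightarrow> nat \<Rightarrow> real) \<Rightarrow> bool" where
  "apps_ok V A dest nT L w \<longleftrightarrow> finite A \<and>
     (\<forall>a\<in>A. dest a \<in> V \<and> (\<forall>k\<le>nT a. L a k > 0 \<and> (\<forall>i\<in>V. w i a k > 0)))"

abbreviation nbrs0 :: "'v set \<Rightarrow> 'v option set" where
  "nbrs0 V \<equiv> insert None (Some ` V)"

definition strategy_ok :: "'v set \<Rightarrow> ('v \<times> 'v) set \<Rightarrow> 'a set \<Rightarrow> ('a \<Rightarrow> 'v) \<Rightarrow> ('a \<Rightarrow> nat)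
    \<Rightarrow> ('v \<Rightarrow> 'v option \<Rightarrow> 'a \<Rightarrow> nat \<Rightarrow> real) \<Rightarrow> bool" where
  "strategy_ok V E A dest nT phi \<longleftrightarrow>
     (\<forall>i\<in>V. \<forall>a\<in>A.
        phi i None a (nT a) = 0 \<and>
        (\<forall>k\<le>nT a.
           (\<forall>j\<in>nbrs0 V. 0 \<le> phi i j a k \<and> phi i j a k \<le> 1) \<and>
           (\<forall>j\<in>V. (i, j) \<notin> E \<longrightarrow> phi i (Some j) a k = 0) \<and>
           (\<Sum>j\<in>nbrs0 V. phi i j a k) = (if k = nT a \<and> i = dest a then 0 else 1)))"

definition is_traffic :: "'v set \<Rightarrow> 'a set \<Rightarrow> ('a \<Rightarrow> nat) \<Rightarrow> ('v \<Rightarrow> 'a \<Rightarrow> real)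
    \<Rightarrow> ('v \<Rightarrow> 'v option \<Rightarrow> 'a \<Rightarrow> nat \<Rightarrow> real) \<Rightarrow> ('v \<Rightarrow> 'a \<Rightarrow> nat \<Rightarrow> real) \<Rightarrow> bool" where
  "is_traffic V A nT r phi t \<longleftrightarrow>
     (\<forall>i\<in>V. \<forall>a\<in>A.
        (\<forall>k\<le>nT a. 0 \<le> t i a k) \<and>
        t i a 0 = (\<Sum>j\<in>V. t j a 0 * phi j (Some i) a 0) + r i a \<and>
        (\<forall>k. 1 \<le> k \<and> k \<le> nT a \<longrightarrow>
           t i a k = (\<Sum>j\<in>V. t j a k * phi j (Some i) a k) + t i a (k - 1) * phi i None a (k - 1)))"

definition link_flow :: "'a set \<Rightarrow> ('a \<Rightarrow> nat) \<Rightarrow> ('a \<Rightarrow> nat \<Rightarrow> real)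
    \<Rightarrow> ('v \<Rightarrow> 'v option \<Rightarrow> 'a \<Rightarrow> nat \<Rightarrow> real) \<Rightarrow> ('v \<Rightarrow> 'a \<Rightarrow> nat \<Rightarrow> real) \<Rightarrow> 'v \<Rightarrow> 'v \<Rightarrow> real" where
  "link_flow A nT L phi t i j = (\<Sum>a\<in>A. \<Sum>k\<le>nT a. L a k * (t i a k * phi i (Some j) a k))"

definition workload :: "'a set \<Rightarrow> ('a \<Rightarrow> nat) \<Rightarrow> ('v \<Rightarrow> 'a \<Rightarrow> nat \<Rightarrow> real)
    \<Rightarrow> ('v \<Rightarrow> 'v option \<Rightarrow> 'a \<Rightarrow> nat \<Rightarrow> real) \<Rightarrow> ('v \<Rightarrow> 'a \<Rightarrow> nat \<Rightarrow> real) \<Rightarrow> 'v \<Rightarrow> real" where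
  "workload A nT w phi t i = (\<Sum>a\<in>A. \<Sum>k\<le>nT a. w i a k * (t i a k * phi i None a k))"

definition total_cost :: "'v set \<Rightarrow> ('v \<times> 'v) set \<Rightarrow> 'a set \<Rightarrow> ('a \<Rightarrow> nat)
    \<Rightarrow> ('a \<Rightarrow> nat \<Rightarrow> real) \<Rightarrow> ('v \<Rightarrow> 'a \<Rightarrow> nat \<Rightarrow> real)
    \<Rightarrow> ('v \<Rightarrow> 'v \<Rightarrow> real \<Rightarrow> ereal) \<Rightarrow> ('v \<Rightarrow> real \<Rightarrow> ereal)
    \<Rightarrow> ('v \<Rightarrow> 'v option \<Rightarrow> 'a \<Rightarrow> nat \<Rightarrow> real) \<Rightarrow> ('v \<Rightarrow> 'a \<Rightarrow> nat \<Rightarrow> real) \<Rightarrow> ereal" where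
  "total_cost V E A nT L w D C phi t =
     (\<Sum>(i, j)\<in>E. D i j (link_flow A nT L phi t i j)) + (\<Sum>i\<in>V. C i (workload A nT w phi t i))"

definition feasible :: "'v set \<Rightarrow> ('v \<times> 'v) set \<Rightarrow> 'a set \<Rightarrow> ('a \<Rightarrow> 'v) \<Rightarrow> ('a \<Rightarrow> nat)
    \<Rightarrow> ('a \<Rightarrow> nat \<Rightarrow> real) \<Rightarrow> ('v \<Rightarrow> 'a \<Rightarrow> nat \<Rightarrow> real)
    \<Rightarrow> ('v \<Rightarrow> 'v \<Rightarrow> real \<Rightarrow> ereal) \<Rightarrow> ('v \<Rightarrow> real \<Rightarrow> ereal) \<Rightarrow> ('v \<Rightarrow> 'a \<Rightarrow> real)
    \<Rightarrow> ('v \<Rightarrow> 'v option \<Rightarrow> 'a \<Rightarrow> nat \<Rightarrow> real) \<Rightarrow> ('v \<Rightarrow> 'a \<Rightarrow> nat \<Rightarrow> real) \<Rightarrow> bool" where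
  "feasible V E A dest nT L w D C r phi t \<longleftrightarrow>
     strategy_ok V E A dest nT phi \<and> is_traffic V A nT r phi t \<and>
     (\<forall>(i, j)\<in>E. D i j (link_flow A nT L phi t i j) < \<infinity>) \<and>
     (\<forall>i\<in>V. C i (workload A nT w phi t i) < \<infinity>)"

text \<open>m i a k = \<partial>T/\<partial>t_i(a,k): the marginal cost equations.\<close>
definition is_marginal :: "'v set \<Rightarrow> 'a set \<Rightarrow> ('a \<Rightarrow> 'v) \<Rightarrow> ('a \<Rightarrow> nat)
    \<Rightarrow> ('a \<Rightarrow> nat \<Rightarrow> real) \<Rightarrow> ('v \<Rightarrow> 'a \<Rightarrow> nat \<Rightarrow> real)
    \<Rightarrow> ('v \<Rightarrow> 'v \<Rightarrow> real \<Rightarrow> real) \<Rightarrow> ('v \<Rightarrow> real \<Rightarrow> real)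
    \<Rightarrow> ('v \<Rightarrow> 'v option \<Rightarrow> 'a \<Rightarrow> nat \<Rightarrow> real) \<Rightarrow> ('v \<Rightarrow> 'a \<Rightarrow> nat \<Rightarrow> real)
    \<Rightarrow> ('v \<Rightarrow> 'a \<Rightarrow> nat \<Rightarrow> real) \<Rightarrow> bool" where
  "is_marginal V A dest nT L w D' C' phi t m \<longleftrightarrow>
     (\<forall>a\<in>A. m (dest a) a (nT a) = 0 \<and>
        (\<forall>i\<in>V. \<forall>k\<le>nT a.
           m i a k =
             (if k < nT a
              then phi i None a k * (w i a k * C' i (workload A nT w phi t i) + m i a (Suc k))
              else 0) +
             (\<Sum>j\<in>V. phi i (Some j) a k *
                  (L a k * D' i j (link_flow A nT L phi t i j) + m j a k))))"

definition delta :: "('v \<times> 'v) set \<Rightarrow> 'a set \<Rightarrow> ('a \<Rightarrow> nat)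
    \<Rightarrow> ('a \<Rightarrow> nat \<Rightarrow> real) \<Rightarrow> ('v \<Rightarrow> 'a \<Rightarrow> nat \<Rightarrow> real)
    \<Rightarrow> ('v \<Rightarrow> 'v \<Rightarrow> real \<Rightarrow> real) \<Rightarrow> ('v \<Rightarrow> real \<Rightarrow> real)
    \<Rightarrow> ('v \<Rightarrow> 'v option \<Rightarrow> 'a \<Rightarrow> nat \<Rightarrow> real) \<Rightarrow> ('v \<Rightarrow> 'a \<Rightarrow> nat \<Rightarrow> real)
    \<Rightarrow> ('v \<Rightarrow> 'a \<Rightarrow> nat \<Rightarrow> real) \<Rightarrow> 'v \<Rightarrow> 'v option \<Rightarrow> 'a \<Rightarrow> nat \<Rightarrow> ereal" where
  "delta E A nT L w D' C' phi t m i j a k =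
     (case j of
        None \<Rightarrow> (if k < nT a
                 then ereal (w i a k * C' i (workload A nT w phi t i) + m i a (Suc k))
                 else \<infinity>)
      | Some j' \<Rightarrow> (if (i, j') \<in> E
                    then ereal (L a k * D' i j' (link_flow A nT L phi t i j') + m j' a k)
                    else \<infinity>))"

end

theory Submission
  imports Defs
begin


lemma cost_fun_supp:
  assumes hc: "cost_fun h h'" and x0: "0 \<le> x" and hx: "h x < \<infinity>" and y0: "0 \<le> y"
  shows "ereal (real_of_ereal (h x) + h' x * (y - x)) \<le> h y"
proof (cases "h y = \<infinity>")
  case True then show ?thesis by simp
next
  case False
  have nm: "\<And>z. 0 \<le> z \<Longrightarrow> h z \<noteq> -\<infinity>" using hc by (auto simp: cost_fun_def)
  have cvx: "ext_convex_nonneg h" using hc by (simp add: cost_fun_def)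
  define f where "f z = real_of_ereal (h z)" for z
  have hxe: "h x = ereal (f x)" using hx nm[OF x0] unfolding f_def by (cases "h x") auto
  have hye: "h y = ereal (f y)" using False nm[OF y0] unfolding f_def by (cases "h y") auto
  show ?thesis
  proof (cases "y = x")
    case True then show ?thesis using hxe by simp
  next
    case ne: False
    define S where "S = {z. 0 \<le> z \<and> h z < \<infinity>}"
    have der: "(f has_real_derivative h' x) (at x within S)"
      using hc x0 hx unfolding cost_fun_def S_def f_def by blast
    define g where "g u = x + u * (y - x)" for u :: real
    have key: "g u \<in> S \<and> f (g u) \<le> (1 - u) * f x + u * f y" if u: "0 \<le> u" "u \<le> 1" for u
    proof -
      have eq: "g u = (1 - u) * x + u * y" unfolding g_def by (simp add: algebra_simps)
      have g0: "0 \<le> g u" unfolding eq using u x0 y0 by simp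
      have "h (g u) \<le> ereal (1 - u) * h x + ereal u * h y"
        using cvx u x0 y0 unfolding ext_convex_nonneg_def eq by blast
      also have "\<dots> = ereal ((1 - u) * f x + u * f y)" using hxe hye by simp
      finally have le: "h (g u) \<le> ereal ((1 - u) * f x + u * f y)" .
      have fin: "h (g u) < \<infinity>" by (rule order.strict_trans1[OF le]) simp
      have "h (g u) = ereal (f (g u))" using fin nm[OF g0] unfolding f_def by (cases "h (g u)") auto
      then show ?thesis using le fin g0 unfolding S_def by auto
    qed
    have gder: "(g has_real_derivative (y - x)) (at 0 within {0..1})"
      unfolding g_def by (auto intro!: derivative_eq_intros)
    have img: "g ` {0..1} \<subseteq> S" using key by auto
    have g00: "g 0 = x" by (simp add: g_def)
    have der2: "(f has_real_derivative h' x) (at (g 0) within g ` {0..1})"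
      using DERIV_subset[OF der img] g00 by simp
    have cd: "(f \<circ> g has_real_derivative h' x * (y - x)) (at 0 within {0..1})"
      by (rule DERIV_image_chain[OF der2 gder])
    then have lim: "((\<lambda>u. ((f \<circ> g) u - (f \<circ> g) 0) / (u - 0)) \<longlongrightarrow> h' x * (y - x)) (at_right 0)"
      unfolding has_field_derivative_iff by (simp add: at_within_Icc_at_right)
    have ev: "eventually (\<lambda>u. f y - f x \<ge> ((f \<circ> g) u - (f \<circ> g) 0) / (u - 0)) (at_right (0::real))"
    proof (rule eventually_mono[OF eventually_at_right_real[of 0 1]])
      fix u :: real assume "u \<in> {0<..<1}"
      then have u: "0 < u" "u < 1" by auto
      have "f (g u) - f x \<le> u * (f y - f x)" using key[of u] u by (simp add: algebra_simps)
      then show "((f \<circ> g) u - (f \<circ> g) 0) / (u - 0) \<le> f y - f x"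
        using u g00 by (simp add: divide_le_eq mult.commute)
    qed simp
    have "h' x * (y - x) \<le> f y - f x"
      by (rule tendsto_upperbound[OF lim ev]) simp
    then show ?thesis using hye hxe by simp
  qed
qed



lemma sum_nbrs0: "finite V \<Longrightarrow> (\<Sum>j\<in>nbrs0 V. f j) = f None + (\<Sum>j\<in>V. f (Some j))"
  by (simp add: sum.reindex)

definition coef :: "('v \<Rightarrow> 'v \<Rightarrow> 'a \<Rightarrow> nat \<Rightarrow> real) \<Rightarrow> ('v \<Rightarrow> 'a \<Rightarrow> nat \<Rightarrow> real)
   \<Rightarrow> ('v \<Rightarrow> 'a \<Rightarrow> nat \<Rightarrow> real) \<Rightarrow> 'v \<Rightarrow> 'v option \<Rightarrow> 'a \<Rightarrow> nat \<Rightarrow> real" where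
  "coef cF cG m i j a k = (case j of None \<Rightarrow> cG i a k + m i a (Suc k) | Some j' \<Rightarrow> cF i j' a k + m j' a k)"

lemma telescope:
  assumes fin: "finite V" and str: "strategy_ok V E A dest nT p" and tr: "is_traffic V A nT r p \<tau>"
    and a: "a \<in> A"
  shows "(\<Sum>k\<le>nT a. \<Sum>i\<in>V. \<tau> i a k * (\<Sum>j\<in>nbrs0 V. p i j a k * coef cF cG m i j a k)) =
    (\<Sum>k\<le>nT a. \<Sum>i\<in>V. \<tau> i a k * ((\<Sum>j\<in>V. p i (Some j) a k * cF i j a k) + p i None a k * cG i a k))
    + (\<Sum>k\<le>nT a. \<Sum>i\<in>V. m i a k * \<tau> i a k) - (\<Sum>i\<in>V. r i a * m i a 0)"
proof -
  define X where "X k = (\<Sum>i\<in>V. \<tau> i a k * (\<Sum>j\<in>V. p i (Some j) a k * m j a k))" for k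
  define Y where "Y k = (\<Sum>i\<in>V. \<tau> i a k * (p i None a k * m i a (Suc k)))" for k
  define Lk where "Lk k = (\<Sum>i\<in>V. \<tau> i a k * ((\<Sum>j\<in>V. p i (Some j) a k * cF i j a k) + p i None a k * cG i a k))" for k
  define M where "M k = (\<Sum>i\<in>V. m i a k * \<tau> i a k)" for k
  have perk: "(\<Sum>i\<in>V. \<tau> i a k * (\<Sum>j\<in>nbrs0 V. p i j a k * coef cF cG m i j a k)) = Lk k + X k + Y k" for k
    unfolding Lk_def X_def Y_def
    by (simp add: sum_nbrs0[OF fin] coef_def algebra_simps sum.distrib sum_distrib_left)
  have Xs: "X k = (\<Sum>j\<in>V. m j a k * (\<Sum>i\<in>V. \<tau> i a k * p i (Some j) a k))" for k
    unfolding X_def sum_distrib_left by (subst sum.swap) (simp add: mult_ac)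
  have X0: "X 0 = M 0 - (\<Sum>i\<in>V. r i a * m i a 0)"
  proof -
    have "X 0 = (\<Sum>j\<in>V. m j a 0 * (\<tau> j a 0 - r j a))"
      unfolding Xs using tr a by (intro sum.cong refl) (auto simp: is_traffic_def)
    then show ?thesis unfolding M_def by (simp add: algebra_simps sum_subtractf)
  qed
  have XS: "X (Suc k) = M (Suc k) - Y k" if "Suc k \<le> nT a" for k
  proof -
    have "X (Suc k) = (\<Sum>j\<in>V. m j a (Suc k) * (\<tau> j a (Suc k) - \<tau> j a k * p j None a k))"
      unfolding Xs using tr a that by (intro sum.cong refl) (auto simp: is_traffic_def)
    then show ?thesis unfolding M_def Y_def by (simp add: algebra_simps sum_subtractf)
  qed
  have Yn: "Y (nT a) = 0" using str a unfolding Y_def strategy_ok_def by simp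
  have ind: "n \<le> nT a \<Longrightarrow> (\<Sum>k\<le>n. X k + Y k) = (\<Sum>k\<le>n. M k) - (\<Sum>i\<in>V. r i a * m i a 0) + Y n" for n
  proof (induction n)
    case 0 then show ?case using X0 by simp
  next
    case (Suc n) then show ?case using XS[of n] by simp
  qed
  have "(\<Sum>k\<le>nT a. \<Sum>i\<in>V. \<tau> i a k * (\<Sum>j\<in>nbrs0 V. p i j a k * coef cF cG m i j a k))
     = (\<Sum>k\<le>nT a. Lk k) + (\<Sum>k\<le>nT a. X k + Y k)"
    unfolding perk by (simp add: sum.distrib add.assoc)
  also have "\<dots> = (\<Sum>k\<le>nT a. Lk k) + (\<Sum>k\<le>nT a. M k) - (\<Sum>i\<in>V. r i a * m i a 0)"
    using ind[of "nT a"] Yn by simp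
  finally show ?thesis unfolding Lk_def M_def .
qed

lemma lin_eq:
  assumes finV: "finite V" and finA: "finite A" and EV: "E \<subseteq> V \<times> V"
    and str: "strategy_ok V E A dest nT p"
  shows "(\<Sum>(i,j)\<in>E. dF i j * link_flow A nT L p \<tau> i j) + (\<Sum>i\<in>V. dG i * workload A nT w p \<tau> i)
    = (\<Sum>a\<in>A. \<Sum>k\<le>nT a. \<Sum>i\<in>V. \<tau> i a k * ((\<Sum>j\<in>V. p i (Some j) a k * (L a k * dF i j)) + p i None a k * (w i a k * dG i)))"
proof -
  have e1: "(\<Sum>(i,j)\<in>E. dF i j * link_flow A nT L p \<tau> i j) = (\<Sum>(i,j)\<in>V \<times> V. dF i j * link_flow A nT L p \<tau> i j)"
  proof (rule sum.mono_neutral_left)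
    show "finite (V \<times> V)" using finV by simp
    show "E \<subseteq> V \<times> V" by (rule EV)
    show "\<forall>x\<in>V \<times> V - E. (case x of (i, j) \<Rightarrow> dF i j * link_flow A nT L p \<tau> i j) = 0"
      using str unfolding strategy_ok_def link_flow_def by auto
  qed
  have e2: "(\<Sum>(i,j)\<in>V \<times> V. dF i j * link_flow A nT L p \<tau> i j)
     = (\<Sum>a\<in>A. \<Sum>k\<le>nT a. \<Sum>i\<in>V. \<Sum>j\<in>V. \<tau> i a k * (p i (Some j) a k * (L a k * dF i j)))"
  proof -
    have "(\<Sum>(i,j)\<in>V \<times> V. dF i j * link_flow A nT L p \<tau> i j)
       = (\<Sum>i\<in>V. \<Sum>j\<in>V. \<Sum>a\<in>A. \<Sum>k\<le>nT a. \<tau> i a k * (p i (Some j) a k * (L a k * dF i j)))"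
      unfolding sum.cartesian_product[symmetric] link_flow_def sum_distrib_left by (simp add: mult_ac)
    also have "\<dots> = (\<Sum>i\<in>V. \<Sum>a\<in>A. \<Sum>j\<in>V. \<Sum>k\<le>nT a. \<tau> i a k * (p i (Some j) a k * (L a k * dF i j)))"
      by (rule sum.cong[OF refl], rule sum.swap)
    also have "\<dots> = (\<Sum>a\<in>A. \<Sum>i\<in>V. \<Sum>j\<in>V. \<Sum>k\<le>nT a. \<tau> i a k * (p i (Some j) a k * (L a k * dF i j)))"
      by (rule sum.swap)
    also have "\<dots> = (\<Sum>a\<in>A. \<Sum>i\<in>V. \<Sum>k\<le>nT a. \<Sum>j\<in>V. \<tau> i a k * (p i (Some j) a k * (L a k * dF i j)))"
      by (intro sum.cong refl, rule sum.swap)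
    also have "\<dots> = (\<Sum>a\<in>A. \<Sum>k\<le>nT a. \<Sum>i\<in>V. \<Sum>j\<in>V. \<tau> i a k * (p i (Some j) a k * (L a k * dF i j)))"
      by (intro sum.cong refl, rule sum.swap)
    finally show ?thesis .
  qed
  have e3: "(\<Sum>i\<in>V. dG i * workload A nT w p \<tau> i)
     = (\<Sum>a\<in>A. \<Sum>k\<le>nT a. \<Sum>i\<in>V. \<tau> i a k * (p i None a k * (w i a k * dG i)))"
  proof -
    have "(\<Sum>i\<in>V. dG i * workload A nT w p \<tau> i)
       = (\<Sum>i\<in>V. \<Sum>a\<in>A. \<Sum>k\<le>nT a. \<tau> i a k * (p i None a k * (w i a k * dG i)))"
      unfolding workload_def sum_distrib_left by (simp add: mult_ac)
    also have "\<dots> = (\<Sum>a\<in>A. \<Sum>i\<in>V. \<Sum>k\<le>nT a. \<tau> i a k * (p i None a k * (w i a k * dG i)))"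
      by (rule sum.swap)
    also have "\<dots> = (\<Sum>a\<in>A. \<Sum>k\<le>nT a. \<Sum>i\<in>V. \<tau> i a k * (p i None a k * (w i a k * dG i)))"
      by (intro sum.cong refl, rule sum.swap)
    finally show ?thesis .
  qed
  show ?thesis unfolding e1 e2 e3
    by (simp add: sum.distrib[symmetric] sum_distrib_left algebra_simps)
qed



lemma sum_case_ereal: "(\<Sum>(i,j)\<in>E. ereal (g i j)) = ereal (\<Sum>(i,j)\<in>E. g i j)"
  by (simp add: split_def)

lemma flows_nonneg:
  assumes apps: "apps_ok V A dest nT L w" and str: "strategy_ok V E A dest nT p"
    and tr: "is_traffic V A nT r p \<tau>" and i: "i \<in> V" and j: "j \<in> V"
  shows "0 \<le> link_flow A nT L p \<tau> i j" "0 \<le> workload A nT w p \<tau> i"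
proof -
  show "0 \<le> link_flow A nT L p \<tau> i j" unfolding link_flow_def
  proof (intro sum_nonneg)
    fix a k assume a: "a \<in> A" and k: "k \<in> {..nT a}"
    have "0 < L a k" using apps a k by (auto simp: apps_ok_def)
    moreover have "0 \<le> \<tau> i a k" using tr a k i by (auto simp: is_traffic_def)
    moreover have "0 \<le> p i (Some j) a k" using str a k i j by (auto simp: strategy_ok_def)
    ultimately show "0 \<le> L a k * (\<tau> i a k * p i (Some j) a k)" by simp
  qed
  show "0 \<le> workload A nT w p \<tau> i" unfolding workload_def
  proof (intro sum_nonneg)
    fix a k assume a: "a \<in> A" and k: "k \<in> {..nT a}"
    have "0 < w i a k" using apps a k i by (auto simp: apps_ok_def)
    moreover have "0 \<le> \<tau> i a k" using tr a k i by (auto simp: is_traffic_def)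
    moreover have "0 \<le> p i None a k" using str a k i by (auto simp: strategy_ok_def)
    ultimately show "0 \<le> w i a k * (\<tau> i a k * p i None a k)" by simp
  qed
qed



theorem theorem2:
  fixes V :: "'v set" and E :: "('v \<times> 'v) set" and A :: "'a set"
    and dest :: "'a \<Rightarrow> 'v" and nT :: "'a \<Rightarrow> nat"
    and L :: "'a \<Rightarrow> nat \<Rightarrow> real" and w :: "'v \<Rightarrow> 'a \<Rightarrow> nat \<Rightarrow> real"
    and r :: "'v \<Rightarrow> 'a \<Rightarrow> real"
    and D :: "'v \<Rightarrow> 'v \<Rightarrow> real \<Rightarrow> ereal" and D' :: "'v \<Rightarrow> 'v \<Rightarrow> real \<Rightarrow> real"
    and C :: "'v \<Rightarrow> real \<Rightarrow> ereal" and C' :: "'v \<Rightarrow> real \<Rightarrow> real"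
    and phi :: "'v \<Rightarrow> 'v option \<Rightarrow> 'a \<Rightarrow> nat \<Rightarrow> real"
    and t :: "'v \<Rightarrow> 'a \<Rightarrow> nat \<Rightarrow> real"
    and m :: "'v \<Rightarrow> 'a \<Rightarrow> nat \<Rightarrow> real"
  assumes net: "network V E"
    and apps: "apps_ok V A dest nT L w"
    and r_nonneg: "\<forall>i\<in>V. \<forall>a\<in>A. 0 \<le> r i a"
    and D_cost: "\<forall>(i, j)\<in>E. cost_fun (D i j) (D' i j)"
    and C_cost: "\<forall>i\<in>V. cost_fun (C i) (C' i)"
    and feas: "feasible V E A dest nT L w D C r phi t"
    and marg: "is_marginal V A dest nT L w D' C' phi t m"
    and cond: "\<forall>i\<in>V. \<forall>a\<in>A. \<forall>k\<le>nT a. \<forall>j\<in>nbrs0 V.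
       (phi i j a k > 0 \<longrightarrow>
          delta E A nT L w D' C' phi t m i j a k
            = Min ((\<lambda>j'. delta E A nT L w D' C' phi t m i j' a k) ` nbrs0 V)) \<and>
       (phi i j a k = 0 \<longrightarrow>
          delta E A nT L w D' C' phi t m i j a k
            \<ge> Min ((\<lambda>j'. delta E A nT L w D' C' phi t m i j' a k) ` nbrs0 V))"
  shows "\<forall>phi' t'. feasible V E A dest nT L w D C r phi' t' \<longrightarrow>
           total_cost V E A nT L w D C phi t \<le> total_cost V E A nT L w D C phi' t'"
proof (intro allI impI)
  fix phi' t'
  assume feas': "feasible V E A dest nT L w D C r phi' t'"
  have finV: "finite V" and EV: "E \<subseteq> V \<times> V" using net by (auto simp: network_def)
  have finA: "finite A" using apps by (simp add: apps_ok_def)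
  have finE: "finite E" using finite_subset[OF EV] finV by simp
  have str: "strategy_ok V E A dest nT phi" and tr: "is_traffic V A nT r phi t"
    and Dfin: "\<forall>(i, j)\<in>E. D i j (link_flow A nT L phi t i j) < \<infinity>"
    and Cfin: "\<forall>i\<in>V. C i (workload A nT w phi t i) < \<infinity>"
    using feas by (auto simp: feasible_def)
  have str': "strategy_ok V E A dest nT phi'" and tr': "is_traffic V A nT r phi' t'"
    using feas' by (auto simp: feasible_def)
  define dF where "dF i j = D' i j (link_flow A nT L phi t i j)" for i j
  define dG where "dG i = C' i (workload A nT w phi t i)" for i
  define cf where "cf = coef (\<lambda>i j a k. L a k * dF i j) (\<lambda>i a k. w i a k * dG i) m"
  have delta_eq: "delta E A nT L w D' C' phi t m i j a k =
     (case j of None \<Rightarrow> (if k < nT a then ereal (cf i j a k) else \<infinity>)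
       | Some j' \<Rightarrow> (if (i, j') \<in> E then ereal (cf i j a k) else \<infinity>))" for i j a k
    unfolding delta_def cf_def coef_def dF_def dG_def by (cases j) auto
  have posfin: "delta E A nT L w D' C' phi t m i j a k = ereal (cf i j a k)"
    if q: "strategy_ok V E A dest nT q" "i \<in> V" "a \<in> A" "k \<le> nT a" "j \<in> nbrs0 V" "q i j a k > 0" for q i j a k
  proof (cases j)
    case None
    have "k < nT a"
    proof (rule ccontr)
      assume "\<not> k < nT a" then have "k = nT a" using q by simp
      then show False using q None by (auto simp: strategy_ok_def)
    qed
    then show ?thesis using None by (simp add: delta_eq)
  next
    case (Some j')
    have "(i, j') \<in> E"
    proof (rule ccontr)
      assume "(i, j') \<notin> E"
      then have "q i (Some j') a k = 0" using q Some by (auto simp: strategy_ok_def)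
      then show False using q Some by simp
    qed
    then show ?thesis using Some by (simp add: delta_eq)
  qed
  have Qphi: "(\<Sum>j\<in>nbrs0 V. phi i j a k * cf i j a k) = m i a k"
    if "i \<in> V" "a \<in> A" "k \<le> nT a" for i a k
  proof -
    have m: "m i a k =
             (if k < nT a
              then phi i None a k * (w i a k * C' i (workload A nT w phi t i) + m i a (Suc k))
              else 0) +
             (\<Sum>j\<in>V. phi i (Some j) a k *
                  (L a k * D' i j (link_flow A nT L phi t i j) + m j a k))"
      using marg that unfolding is_marginal_def by blast
    have n0: "phi i None a (nT a) = 0" using str that by (simp add: strategy_ok_def)
    show ?thesis
      using n0 unfolding m sum_nbrs0[OF finV] cf_def coef_def dF_def dG_def
      by (cases "k < nT a") (auto simp: not_less le_antisym[OF \<open>k \<le> nT a\<close>])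
  qed
  have Qge: "m i a k \<le> (\<Sum>j\<in>nbrs0 V. p i j a k * cf i j a k)"
    if p: "strategy_ok V E A dest nT p" and ia: "i \<in> V" "a \<in> A" "k \<le> nT a" for p i a k
  proof (cases "k = nT a \<and> i = dest a")
    case True
    have m0: "m i a k = 0" using marg ia True by (auto simp: is_marginal_def)
    have s0: "(\<Sum>j\<in>nbrs0 V. p i j a k) = 0" using p ia True by (auto simp: strategy_ok_def)
    have nn: "\<forall>j\<in>nbrs0 V. 0 \<le> p i j a k" using p ia by (auto simp: strategy_ok_def)
    have fin0: "finite (nbrs0 V)" using finV by simp
    have "\<forall>j\<in>nbrs0 V. p i j a k = 0"
      using sum_nonneg_eq_0_iff[OF fin0, of "\<lambda>j. p i j a k"] s0 nn by blast
    then have "(\<Sum>j\<in>nbrs0 V. p i j a k * cf i j a k) = 0" by (intro sum.neutral) simp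
    then show ?thesis using m0 by simp
  next
    case False
    have s1: "(\<Sum>j\<in>nbrs0 V. phi i j a k) = 1" using str ia False by (auto simp: strategy_ok_def)
    have s1': "(\<Sum>j\<in>nbrs0 V. p i j a k) = 1" using p ia False by (auto simp: strategy_ok_def)
    have nn: "\<forall>j\<in>nbrs0 V. 0 \<le> phi i j a k" using str ia by (auto simp: strategy_ok_def)
    have nn': "\<forall>j\<in>nbrs0 V. 0 \<le> p i j a k" using p ia by (auto simp: strategy_ok_def)
    have ex: "\<exists>j0\<in>nbrs0 V. phi i j0 a k > 0"
    proof (rule ccontr)
      assume na: "\<not> (\<exists>j0\<in>nbrs0 V. phi i j0 a k > 0)"
      have z: "phi i j a k = 0" if jj: "j \<in> nbrs0 V" for j
      proof -
        have "\<not> phi i j a k > 0" using na jj by blast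
        moreover have "0 \<le> phi i j a k" using nn jj by blast
        ultimately show ?thesis by linarith
      qed
      have "(\<Sum>j\<in>nbrs0 V. phi i j a k) = 0" using z by (intro sum.neutral) blast
      then show False using s1 by simp
    qed
    then obtain j0 where j0: "j0 \<in> nbrs0 V" "phi i j0 a k > 0" by blast
    define M where "M = Min ((\<lambda>j'. delta E A nT L w D' C' phi t m i j' a k) ` nbrs0 V)"
    define \<mu> where "\<mu> = cf i j0 a k"
    have c: "delta E A nT L w D' C' phi t m i j a k = M"
      if "j \<in> nbrs0 V" "phi i j a k > 0" for j
    proof -
      have "\<forall>j\<in>nbrs0 V. (phi i j a k > 0 \<longrightarrow>
          delta E A nT L w D' C' phi t m i j a k
            = Min ((\<lambda>j'. delta E A nT L w D' C' phi t m i j' a k) ` nbrs0 V))"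
        using cond ia by blast
      then show ?thesis using that unfolding M_def by blast
    qed
    have Meq: "M = ereal \<mu>"
      using c[OF j0] posfin[OF str ia j0] unfolding \<mu>_def by simp
    have phieq: "phi i j a k * cf i j a k = phi i j a k * \<mu>" if j: "j \<in> nbrs0 V" for j
    proof (cases "phi i j a k > 0")
      case True
      then have "ereal (cf i j a k) = M" using c[OF j True] posfin[OF str ia j True] by simp
      then show ?thesis using Meq by simp
    next
      case False
      then have "phi i j a k = 0" using nn j by force
      then show ?thesis by simp
    qed
    have pge: "p i j a k * \<mu> \<le> p i j a k * cf i j a k" if j: "j \<in> nbrs0 V" for j
    proof (cases "p i j a k > 0")
      case True
      have "M \<le> delta E A nT L w D' C' phi t m i j a k"
        unfolding M_def using finV j by (intro Min_le) auto
      then have "\<mu> \<le> cf i j a k" using Meq posfin[OF p ia j True] by simp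
      then show ?thesis using True by (simp add: mult_left_mono)
    next
      case False
      then have "p i j a k = 0" using nn' j by force
      then show ?thesis by simp
    qed
    have "m i a k = (\<Sum>j\<in>nbrs0 V. phi i j a k * cf i j a k)" using Qphi ia by simp
    also have "\<dots> = (\<Sum>j\<in>nbrs0 V. phi i j a k * \<mu>)" using phieq by (rule sum.cong[OF refl])
    also have "\<dots> = \<mu>" using s1 by (simp add: sum_distrib_right[symmetric])
    also have "\<dots> = (\<Sum>j\<in>nbrs0 V. p i j a k * \<mu>)" using s1' by (simp add: sum_distrib_right[symmetric])
    also have "\<dots> \<le> (\<Sum>j\<in>nbrs0 V. p i j a k * cf i j a k)" using pge by (rule sum_mono)
    finally show ?thesis .
  qed
  define Lin where "Lin p \<tau> = (\<Sum>(i,j)\<in>E. dF i j * link_flow A nT L p \<tau> i j) + (\<Sum>i\<in>V. dG i * workload A nT w p \<tau> i)" for p \<tau>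
  define R where "R = (\<Sum>a\<in>A. \<Sum>i\<in>V. r i a * m i a 0)"
  have Lin_form: "Lin p \<tau> = (\<Sum>a\<in>A. (\<Sum>k\<le>nT a. \<Sum>i\<in>V. \<tau> i a k * (\<Sum>j\<in>nbrs0 V. p i j a k * cf i j a k))
       - (\<Sum>k\<le>nT a. \<Sum>i\<in>V. m i a k * \<tau> i a k) + (\<Sum>i\<in>V. r i a * m i a 0))"
    if "strategy_ok V E A dest nT p" "is_traffic V A nT r p \<tau>" for p \<tau>
  proof -
    have "Lin p \<tau> = (\<Sum>a\<in>A. \<Sum>k\<le>nT a. \<Sum>i\<in>V. \<tau> i a k * ((\<Sum>j\<in>V. p i (Some j) a k * (L a k * dF i j)) + p i None a k * (w i a k * dG i)))"
      unfolding Lin_def by (rule lin_eq[OF finV finA EV that(1)])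
    also have "\<dots> = (\<Sum>a\<in>A. (\<Sum>k\<le>nT a. \<Sum>i\<in>V. \<tau> i a k * (\<Sum>j\<in>nbrs0 V. p i j a k * cf i j a k))
       - (\<Sum>k\<le>nT a. \<Sum>i\<in>V. m i a k * \<tau> i a k) + (\<Sum>i\<in>V. r i a * m i a 0))"
    proof (rule sum.cong[OF refl])
      fix a assume a: "a \<in> A"
      show "(\<Sum>k\<le>nT a. \<Sum>i\<in>V. \<tau> i a k * ((\<Sum>j\<in>V. p i (Some j) a k * (L a k * dF i j)) + p i None a k * (w i a k * dG i)))
         = (\<Sum>k\<le>nT a. \<Sum>i\<in>V. \<tau> i a k * (\<Sum>j\<in>nbrs0 V. p i j a k * cf i j a k))
       - (\<Sum>k\<le>nT a. \<Sum>i\<in>V. m i a k * \<tau> i a k) + (\<Sum>i\<in>V. r i a * m i a 0)"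
        using telescope[OF finV that(1) that(2) a, of "\<lambda>i j a k. L a k * dF i j" "\<lambda>i a k. w i a k * dG i" m]
        unfolding cf_def by linarith
    qed
    finally show ?thesis .
  qed
  have Lin_phi: "Lin phi t = R"
  proof -
    have "Lin phi t = (\<Sum>a\<in>A. (\<Sum>i\<in>V. r i a * m i a 0))"
      unfolding Lin_form[OF str tr]
    proof (rule sum.cong[OF refl])
      fix a assume a: "a \<in> A"
      have "(\<Sum>k\<le>nT a. \<Sum>i\<in>V. t i a k * (\<Sum>j\<in>nbrs0 V. phi i j a k * cf i j a k))
          = (\<Sum>k\<le>nT a. \<Sum>i\<in>V. m i a k * t i a k)"
        using Qphi a by (auto intro!: sum.cong simp: mult.commute)
      then show "(\<Sum>k\<le>nT a. \<Sum>i\<in>V. t i a k * (\<Sum>j\<in>nbrs0 V. phi i j a k * cf i j a k))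
          - (\<Sum>k\<le>nT a. \<Sum>i\<in>V. m i a k * t i a k) + (\<Sum>i\<in>V. r i a * m i a 0)
          = (\<Sum>i\<in>V. r i a * m i a 0)" by simp
    qed
    then show ?thesis unfolding R_def .
  qed
  have Lin_phi': "R \<le> Lin phi' t'"
  proof -
    have "(\<Sum>a\<in>A. (\<Sum>i\<in>V. r i a * m i a 0)) \<le> Lin phi' t'"
      unfolding Lin_form[OF str' tr']
    proof (rule sum_mono)
      fix a assume a: "a \<in> A"
      have "(\<Sum>k\<le>nT a. \<Sum>i\<in>V. m i a k * t' i a k)
          \<le> (\<Sum>k\<le>nT a. \<Sum>i\<in>V. t' i a k * (\<Sum>j\<in>nbrs0 V. phi' i j a k * cf i j a k))"
      proof (intro sum_mono)
        fix k i assume k: "k \<in> {..nT a}" and i: "i \<in> V"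
        have "0 \<le> t' i a k" using tr' a k i by (auto simp: is_traffic_def)
        then show "m i a k * t' i a k \<le> t' i a k * (\<Sum>j\<in>nbrs0 V. phi' i j a k * cf i j a k)"
          using mult_right_mono[OF Qge[OF str' i a] \<open>0 \<le> t' i a k\<close>] k by (simp add: mult.commute)
      qed
      then show "(\<Sum>i\<in>V. r i a * m i a 0) \<le> (\<Sum>k\<le>nT a. \<Sum>i\<in>V. t' i a k * (\<Sum>j\<in>nbrs0 V. phi' i j a k * cf i j a k))
          - (\<Sum>k\<le>nT a. \<Sum>i\<in>V. m i a k * t' i a k) + (\<Sum>i\<in>V. r i a * m i a 0)" by simp
    qed
    then show ?thesis unfolding R_def .
  qed
  define F where "F i j = link_flow A nT L phi t i j" for i j
  define F' where "F' i j = link_flow A nT L phi' t' i j" for i j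
  define G where "G i = workload A nT w phi t i" for i
  define G' where "G' i = workload A nT w phi' t' i" for i
  define dv where "dv i j = real_of_ereal (D i j (F i j))" for i j
  define cv where "cv i = real_of_ereal (C i (G i))" for i
  have Dle: "ereal (dv i j + dF i j * (F' i j - F i j)) \<le> D i j (F' i j)" if e: "(i, j) \<in> E" for i j
  proof -
    have ij: "i \<in> V" "j \<in> V" using e EV by auto
    have cfD: "cost_fun (D i j) (D' i j)" using D_cost e by blast
    have fin: "D i j (F i j) < \<infinity>" using Dfin e unfolding F_def by blast
    have F0: "0 \<le> F i j" "0 \<le> F' i j" unfolding F_def F'_def
      using flows_nonneg(1)[OF apps str tr ij] flows_nonneg(1)[OF apps str' tr' ij] by auto
    have "ereal (real_of_ereal (D i j (F i j)) + D' i j (F i j) * (F' i j - F i j)) \<le> D i j (F' i j)"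
      by (rule cost_fun_supp[OF cfD F0(1) fin F0(2)])
    then show ?thesis unfolding dv_def dF_def F_def .
  qed
  have Cle: "ereal (cv i + dG i * (G' i - G i)) \<le> C i (G' i)" if i: "i \<in> V" for i
  proof -
    have cfC: "cost_fun (C i) (C' i)" using C_cost i by blast
    have fin: "C i (G i) < \<infinity>" using Cfin i unfolding G_def by blast
    have G0: "0 \<le> G i" "0 \<le> G' i" unfolding G_def G'_def
      using flows_nonneg(2)[OF apps str tr i i] flows_nonneg(2)[OF apps str' tr' i i] by auto
    have "ereal (real_of_ereal (C i (G i)) + C' i (G i) * (G' i - G i)) \<le> C i (G' i)"
      by (rule cost_fun_supp[OF cfC G0(1) fin G0(2)])
    then show ?thesis unfolding cv_def dG_def G_def .
  qed
  have Dfe: "D i j (F i j) = ereal (dv i j)" if e: "(i, j) \<in> E" for i j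
  proof -
    have ij: "i \<in> V" "j \<in> V" using e EV by auto
    have cfD: "cost_fun (D i j) (D' i j)" using D_cost e by blast
    have "D i j (F i j) \<noteq> -\<infinity>" using cfD flows_nonneg(1)[OF apps str tr ij]
      unfolding cost_fun_def F_def by blast
    moreover have "D i j (F i j) < \<infinity>" using Dfin e unfolding F_def by blast
    ultimately show ?thesis unfolding dv_def by (cases "D i j (F i j)") auto
  qed
  have Cfe: "C i (G i) = ereal (cv i)" if i: "i \<in> V" for i
  proof -
    have cfC: "cost_fun (C i) (C' i)" using C_cost i by blast
    have "C i (G i) \<noteq> -\<infinity>" using cfC flows_nonneg(2)[OF apps str tr i i]
      unfolding cost_fun_def G_def by blast
    moreover have "C i (G i) < \<infinity>" using Cfin i unfolding G_def by blast
    ultimately show ?thesis unfolding cv_def by (cases "C i (G i)") auto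
  qed
  have T1: "total_cost V E A nT L w D C phi t = ereal ((\<Sum>(i,j)\<in>E. dv i j) + (\<Sum>i\<in>V. cv i))"
  proof -
    have "(\<Sum>(i,j)\<in>E. D i j (F i j)) = (\<Sum>(i,j)\<in>E. ereal (dv i j))"
      using Dfe by (intro sum.cong) auto
    moreover have "(\<Sum>i\<in>V. C i (G i)) = (\<Sum>i\<in>V. ereal (cv i))"
      using Cfe by (intro sum.cong) auto
    ultimately show ?thesis unfolding total_cost_def F_def G_def sum_case_ereal by simp
  qed
  have T2a: "ereal (\<Sum>(i,j)\<in>E. dv i j + dF i j * (F' i j - F i j)) \<le> (\<Sum>(i,j)\<in>E. D i j (F' i j))"
    unfolding sum_case_ereal[symmetric] using Dle by (intro sum_mono) auto
  have T2b: "ereal (\<Sum>i\<in>V. cv i + dG i * (G' i - G i)) \<le> (\<Sum>i\<in>V. C i (G' i))"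
    unfolding sum_ereal[symmetric] using Cle by (intro sum_mono) auto
  have T2: "ereal ((\<Sum>(i,j)\<in>E. dv i j + dF i j * (F' i j - F i j)) + (\<Sum>i\<in>V. cv i + dG i * (G' i - G i)))
      \<le> total_cost V E A nT L w D C phi' t'"
    unfolding total_cost_def plus_ereal.simps(1)[symmetric]
    using add_mono[OF T2a T2b] unfolding F'_def G'_def .
  have lin_diff: "(\<Sum>(i,j)\<in>E. dv i j + dF i j * (F' i j - F i j)) + (\<Sum>i\<in>V. cv i + dG i * (G' i - G i))
      = (\<Sum>(i,j)\<in>E. dv i j) + (\<Sum>i\<in>V. cv i) + (Lin phi' t' - Lin phi t)"
    unfolding Lin_def F_def F'_def G_def G'_def
    by (simp add: split_def sum.distrib sum_subtractf right_diff_distrib)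
  have "(\<Sum>(i,j)\<in>E. dv i j) + (\<Sum>i\<in>V. cv i)
      \<le> (\<Sum>(i,j)\<in>E. dv i j + dF i j * (F' i j - F i j)) + (\<Sum>i\<in>V. cv i + dG i * (G' i - G i))"
    unfolding lin_diff using Lin_phi Lin_phi' by simp
  then show "total_cost V E A nT L w D C phi t \<le> total_cost V E A nT L w D C phi' t'"
    unfolding T1 using T2 by (meson ereal_less_eq(3) order_trans)
qed


end
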